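(* Let $\delta<\mathfrak t$ be an ordinal and assume: (i) $\bar A=\langle A_i:i<\delta\rangle$ is a sequence of members of $[\omega]^{\aleph_0}$; (ii) $\langle B_n:n<\omega\rangle\subseteq[\omega]^{\aleph_0}$ is $\subseteq^*$-decreasing (i.e. $B_m\subseteq^*B_n$ for $n<m$); (iii) $A_i\cap B_n$ is infinite for every $i<\delta$ and $n<\omega$; (iv) for all $i<j<\delta$ there is $n<\omega$ with $A_j\cap B_n\subseteq^* A_i\cap B_n$. Then there is $A\in[\omega]^{\aleph_0}$ such that $A\subseteq^* A_i$ for all $i<\delta$ and $A\subseteq^* B_n$ for all $n<\omega$.
   Context: $[\omega]^{\aleph_0}$ is the set of infinite subsets of $\omega$; $A\subseteq^* B$ means $A\setminus B$ is finite. $\mathfrak t$ is the least $\kappa$ such that there is a sequence $\langle X_\alpha:\alpha<\kappa\rangle\subseteq[\omega]^{\aleph_0}$ with $X_\beta\subseteq^* X_\alpha$ for $\alpha<\beta<\kappa$ and no $X\in[\omega]^{\aleph_0}$ satisfying $X\subseteq^*X_\alpha$ for all $\alpha$. *)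

theory Defs
  imports Main
begin

definition almost_sub :: "nat set \<Rightarrow> nat set \<Rightarrow> bool" (infix "\<subseteq>\<^sup>*" 50) where
  "A \<subseteq>\<^sup>* B \<longleftrightarrow> finite (A - B)"

text \<open>An ordinal is represented by a well-order s (its order type). A tower of
  length s: members of [omega]^aleph0 indexed by Field s, decreasing mod finite,
  with no infinite pseudo-intersection.\<close>
definition unbounded_tower :: "'k rel \<Rightarrow> ('k \<Rightarrow> nat set) \<Rightarrow> bool" where
  "unbounded_tower s X \<longleftrightarrow>
     (\<forall>\<alpha>\<in>Field s. infinite (X \<alpha>)) \<and>
     (\<forall>\<alpha> \<beta>. (\<alpha>, \<beta>) \<in> s \<and> \<alpha> \<noteq> \<beta> \<longrightarrow> X \<beta> \<subseteq>\<^sup>* X \<alpha>) \<and>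
     \<not> (\<exists>Y. infinite Y \<and> (\<forall>\<alpha>\<in>Field s. Y \<subseteq>\<^sup>* X \<alpha>))"

text \<open>The ordinal (well-order) r is below the tower number t: r is strictly shorter
  than every ordinal carrying an unbounded tower. Since t \<le> continuum, every
  candidate ordinal for the least one has a representative on the type nat set.\<close>
definition below_t :: "'i rel \<Rightarrow> bool" where
  "below_t r \<longleftrightarrow> (\<forall>(s :: nat set rel) X. Well_order s \<and> unbounded_tower s X \<longrightarrow> (r, s) \<in> ordLess)"

end

theory Submission
  imports Defs
begin

lemma restr_ordLeq:
  assumes W: "Well_order r" shows "(Restr r A, r) \<in> ordLeq"
proof (rule ccontr)
  let ?R = "Restr r A"
  have WR: "Well_order ?R" using W Well_order_Restr by blast
  assume "(?R, r) \<notin> ordLeq"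
  hence "(r, ?R) \<in> ordLess" using ordLess_or_ordLeq[OF W WR] by blast
  then obtain f where E: "embedS r ?R f" unfolding ordLess_def by blast
  hence emb: "embed r ?R f" and nb: "\<not> bij_betw f (Field r) (Field ?R)" by (auto simp: embedS_def)
  from embed_iff_compat_inj_on_ofilter[OF W WR] emb have comp: "compat r ?R f"
    and inj: "inj_on f (Field r)" and of: "wo_rel.ofilter ?R (f ` Field r)" by auto
  have FR: "Field ?R \<subseteq> Field r" by (auto simp: Field_def)
  have FRA: "Field ?R \<subseteq> A" by (auto simp: Field_def)
  have img: "f ` Field r \<subseteq> Field ?R" using of WR by (simp add: wo_rel.ofilter_def wo_rel_def)
  have wf: "wf (r - Id)" using W by (simp add: well_order_on_def)
  have tot: "total_on (Field r) r" and refl: "refl_on (Field r) r" and anti: "antisym r"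
    using W by (auto simp: well_order_on_def linear_order_on_def partial_order_on_def preorder_on_def)
  have key: "\<forall>a\<in>Field r. (a, f a) \<in> r"
  proof (rule ccontr)
    assume "\<not> ?thesis"
    then obtain a0 where a0: "a0 \<in> {b. b\<in>Field r \<and> (b, f b) \<notin> r}" by blast
    obtain a where a: "a \<in> {b. b\<in>Field r \<and> (b, f b) \<notin> r}"
      and min: "\<And>b. (b,a) \<in> r - Id \<Longrightarrow> b \<notin> {b. b\<in>Field r \<and> (b, f b) \<notin> r}"
      using wf_eq_minimal[THEN iffD1, OF wf, rule_format, OF a0] by blast
    have fa: "f a \<in> Field r" using a img FR by blast
    have "(f a, a) \<in> r" "f a \<noteq> a" using a fa tot refl
      by (auto simp: total_on_def refl_on_def) (metis refl refl_onD)+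
    hence "(f (f a), f a) \<in> r" using comp by (auto simp: compat_def)
    moreover have "f (f a) \<noteq> f a" using inj fa a \<open>f a \<noteq> a\<close> by (auto dest: inj_onD)
    ultimately have "(f a, f (f a)) \<notin> r" using anti by (auto simp: antisym_def)
    thus False using min[of "f a"] \<open>(f a, a) \<in> r\<close> \<open>f a \<noteq> a\<close> fa by auto
  qed
  have "f ` Field r \<noteq> Field ?R" using nb inj by (auto simp: bij_betw_def)
  then obtain c where c: "c \<in> Field ?R" "c \<notin> f ` Field r" using img by blast
  have cF: "c \<in> Field r" using c FR by blast
  hence "(c, f c) \<in> r" using key by blast
  moreover have "f c \<in> A" "c \<in> A" using img cF FRA c by auto
  ultimately have "(c, f c) \<in> ?R" by blast
  hence "c \<in> under ?R (f c)" by (simp add: under_def)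
  moreover have "under ?R (f c) \<subseteq> f ` Field r" using of cF WR
    by (simp add: wo_rel.ofilter_def wo_rel_def)
  ultimately show False using c by blast
qed


lemma tower_pi:
  fixes r :: "'i rel" and r' :: "'k rel" and X :: "'k \<Rightarrow> nat set"
  assumes W: "Well_order r" and bt: "below_t r" and W': "Well_order r'"
    and le: "(r', r) \<in> ordLeq"
    and inf: "\<forall>\<alpha>\<in>Field r'. infinite (X \<alpha>)"
    and dec: "\<forall>\<alpha> \<beta>. (\<alpha>, \<beta>) \<in> r' \<and> \<alpha> \<noteq> \<beta> \<longrightarrow> X \<beta> \<subseteq>\<^sup>* X \<alpha>"
  shows "\<exists>Y. infinite Y \<and> (\<forall>\<alpha>\<in>Field r'. Y \<subseteq>\<^sup>* X \<alpha>)"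
proof (rule ccontr)
  assume nY: "\<not> ?thesis"
  define I where "I = {\<alpha>\<in>Field r'. \<forall>\<beta>. (\<beta>,\<alpha>)\<in>r' \<and> \<beta>\<noteq>\<alpha> \<longrightarrow> X \<beta> \<noteq> X \<alpha>}"
  define R where "R = Restr r' I"
  have WR: "Well_order R" unfolding R_def using W' Well_order_Restr by blast
  have refl: "refl_on (Field r') r'" and tot: "total_on (Field r') r'"
    using W' unfolding well_order_on_def linear_order_on_def partial_order_on_def preorder_on_def by blast+
  have FR: "Field R = I" unfolding R_def
    by (rule Refl_Field_Restr2[OF refl]) (unfold I_def, blast)
  have inj: "inj_on X I"
  proof (rule inj_onI)
    fix a b assume ab: "a \<in> I" "b \<in> I" "X a = X b"
    show "a = b"
    proof (rule ccontr)
      assume "a \<noteq> b"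
      hence "(a,b) \<in> r' \<or> (b,a) \<in> r'" using tot ab unfolding total_on_def I_def by blast
      thus False using ab \<open>a \<noteq> b\<close> unfolding I_def by blast
    qed
  qed
  define s where "s = dir_image R X"
  have injF: "inj_on X (Field R)" using inj FR by simp
  have Ws: "Well_order s" unfolding s_def by (rule Well_order_dir_image[OF WR injF])
  have iso: "(R, s) \<in> ordIso" unfolding s_def by (rule dir_image_ordIso[OF WR injF])
  have Fs: "Field s = X ` I" unfolding s_def using dir_image_Field[of R X] FR by simp
  have "(s, R) \<in> ordLeq" by (rule ordIso_imp_ordLeq[OF ordIso_symmetric[OF iso]])
  moreover have "(R, r') \<in> ordLeq" unfolding R_def by (rule restr_ordLeq[OF W'])
  ultimately have sle: "(s, r) \<in> ordLeq" using le by (rule ordLeq_transitive[OF ordLeq_transitive])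
  have ut: "unbounded_tower s id"
    unfolding unbounded_tower_def
  proof (intro conjI)
    show "\<forall>\<alpha>\<in>Field s. infinite (id \<alpha>)" unfolding Fs I_def using inf by auto
    show "\<forall>\<alpha> \<beta>. (\<alpha>, \<beta>) \<in> s \<and> \<alpha> \<noteq> \<beta> \<longrightarrow> id \<beta> \<subseteq>\<^sup>* id \<alpha>"
    proof (intro allI impI)
      fix v w assume vw: "(v, w) \<in> s \<and> v \<noteq> w"
      then obtain a b where ab: "v = X a" "w = X b" "(a,b) \<in> r'"
        unfolding s_def dir_image_def R_def by blast
      hence "a \<noteq> b" using vw by blast
      thus "id w \<subseteq>\<^sup>* id v" using dec ab by simp
    qed
    show "\<not> (\<exists>Y. infinite Y \<and> (\<forall>\<alpha>\<in>Field s. Y \<subseteq>\<^sup>* id \<alpha>))"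
    proof
      assume "\<exists>Y. infinite Y \<and> (\<forall>\<alpha>\<in>Field s. Y \<subseteq>\<^sup>* id \<alpha>)"
      then obtain Y where Y: "infinite Y" "\<forall>v\<in>X ` I. Y \<subseteq>\<^sup>* v" using Fs by auto
      have "\<forall>\<alpha>\<in>Field r'. Y \<subseteq>\<^sup>* X \<alpha>"
      proof
        fix \<alpha> assume a: "\<alpha> \<in> Field r'"
        have wf: "wf (r' - Id)" using W' by (simp add: well_order_on_def)
        obtain z where z: "z \<in> {\<gamma>. \<gamma> \<in> Field r' \<and> X \<gamma> = X \<alpha>}"
          and min: "\<And>y. (y,z) \<in> r' - Id \<Longrightarrow> y \<notin> {\<gamma>. \<gamma> \<in> Field r' \<and> X \<gamma> = X \<alpha>}"
          using wf_eq_minimal[THEN iffD1, OF wf, rule_format, of \<alpha> "{\<gamma>. \<gamma> \<in> Field r' \<and> X \<gamma> = X \<alpha>}"] a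
          by blast
        have "z \<in> I" unfolding I_def
        proof (intro CollectI conjI allI impI)
          show "z \<in> Field r'" using z by blast
          fix \<beta> assume "(\<beta>, z) \<in> r' \<and> \<beta> \<noteq> z"
          hence "(\<beta>, z) \<in> r' - Id" "\<beta> \<in> Field r'" by (auto intro: FieldI1)
          thus "X \<beta> \<noteq> X z" using min z by blast
        qed
        thus "Y \<subseteq>\<^sup>* X \<alpha>" using Y z by auto
      qed
      thus False using Y nY by blast
    qed
  qed
  have "(r, s) \<in> ordLess" using bt Ws ut unfolding below_t_def by blast
  thus False using sle not_ordLess_ordLeq by blast
qed


lemma inf_unb: "infinite (S::nat set) \<longleftrightarrow> (\<forall>m. \<exists>n. m < n \<and> n \<in> S)"
proof
  assume "infinite S"
  show "\<forall>m. \<exists>n. m < n \<and> n \<in> S"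
  proof
    fix m
    have "\<not> S \<subseteq> {..m}" using \<open>infinite S\<close> finite_subset by blast
    thus "\<exists>n. m < n \<and> n \<in> S" by (auto simp: not_le)
  qed
next
  assume a: "\<forall>m. \<exists>n. m < n \<and> n \<in> S"
  show "infinite S"
  proof
    assume "finite S"
    then obtain m where "\<forall>n\<in>S. n \<le> m" using finite_nat_set_iff_bounded_le by blast
    thus False using a by (meson not_le)
  qed
qed

lemma thin:
  fixes h :: "nat \<Rightarrow> nat" and P :: "nat set"
  assumes P: "infinite P"
  shows "\<exists>Q\<subseteq>P. infinite Q \<and> (\<forall>y\<in>Q. \<forall>z\<in>Q. y < z \<longrightarrow> h y < z)"
proof -
  have ex: "\<And>m. \<exists>x. x \<in> P \<and> m < x" using P inf_unb by blast
  define q where "q = rec_nat (LEAST x. x \<in> P) (\<lambda>_ p. LEAST x. x \<in> P \<and> max p (h p) < x)"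
  have q0: "q 0 = (LEAST x. x \<in> P)" unfolding q_def by simp
  have qS: "\<And>n. q (Suc n) = (LEAST x. x \<in> P \<and> max (q n) (h (q n)) < x)" unfolding q_def by simp
  have qP: "\<And>n. q n \<in> P"
  proof -
    fix n show "q n \<in> P"
    proof (cases n)
      case 0 thus ?thesis using q0 ex LeastI_ex by metis
    next
      case (Suc m)
      have "q (Suc m) \<in> P \<and> max (q m) (h (q m)) < q (Suc m)"
        unfolding qS by (rule LeastI_ex) (use ex in blast)
      thus ?thesis using Suc by blast
    qed
  qed
  have qgt: "\<And>n. max (q n) (h (q n)) < q (Suc n)"
  proof -
    fix n show "max (q n) (h (q n)) < q (Suc n)"
      unfolding qS using LeastI_ex[of "\<lambda>x. x \<in> P \<and> max (q n) (h (q n)) < x"] ex by blast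
  qed
  have sm: "strict_mono q" by (rule strict_mono_Suc_iff[THEN iffD2]) (use qgt in auto)
  show ?thesis
  proof (intro exI conjI)
    show "range q \<subseteq> P" using qP by blast
    show "infinite (range q)" by (metis finite_imageD infinite_UNIV_nat strict_mono_imp_inj_on sm)
    show "\<forall>y\<in>range q. \<forall>z\<in>range q. y < z \<longrightarrow> h y < z"
    proof (intro ballI impI)
      fix y z assume "y \<in> range q" "z \<in> range q" "y < z"
      then obtain m n where mn: "y = q m" "z = q n" by blast
      hence "m < n" using \<open>y < z\<close> sm strict_mono_less by blast
      hence "q (Suc m) \<le> q n" using sm strict_mono_less_eq by (metis Suc_leI)
      thus "h y < z" using qgt[of m] mn by auto
    qed
  qed
qed

definition bad :: "(nat \<Rightarrow> nat) \<Rightarrow> nat set \<Rightarrow> nat set" where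
  "bad h Q = {y\<in>Q. \<exists>z\<in>Q. y < z \<and> z \<le> h y}"

lemma bad_open:
  assumes "finite (bad h Q)" and "Z \<subseteq>\<^sup>* Q"
  shows "finite (bad h Z)"
proof -
  have fZ: "finite (Z - Q)" using assms(2) by (simp add: almost_sub_def)
  have "bad h Z \<subseteq> (Z - Q) \<union> bad h Q \<union> (\<Union>z'\<in>Z - Q. {..<z'})"
    unfolding bad_def by auto
  moreover have "finite ((Z - Q) \<union> bad h Q \<union> (\<Union>z'\<in>Z - Q. {..<z'}))"
    using fZ assms(1) by auto
  ultimately show ?thesis by (rule finite_subset)
qed

definition Bn :: "(nat \<Rightarrow> nat set) \<Rightarrow> nat \<Rightarrow> nat set" where
  "Bn B n = {x. \<forall>m\<le>n. x \<in> B m}"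

lemma Bn_sub: "Bn B n \<subseteq> B n" unfolding Bn_def by auto

lemma Bn_mono: "m \<le> n \<Longrightarrow> Bn B n \<subseteq> Bn B m" unfolding Bn_def by auto

lemma Bn_fin:
  assumes "\<forall>n m. n < m \<longrightarrow> B m \<subseteq>\<^sup>* B n"
  shows "finite (B n - Bn B n)"
proof -
  have "B n - Bn B n \<subseteq> (\<Union>m<n. B n - B m)" unfolding Bn_def
    by (auto simp: le_less)
  moreover have "finite (\<Union>m<n. B n - B m)"
    by (rule finite_UN_I) (use assms in \<open>auto simp: almost_sub_def\<close>)
  ultimately show ?thesis by (rule finite_subset)
qed

lemma pseudo_B:
  fixes B :: "nat \<Rightarrow> nat set"
  assumes dec: "\<forall>n m. n < m \<longrightarrow> B m \<subseteq>\<^sup>* B n" and inf: "\<forall>n. infinite (B n)"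
  shows "\<exists>X. infinite X \<and> (\<forall>n. X \<subseteq>\<^sup>* B n)"
proof -
  have infB: "\<And>n. infinite (Bn B n)"
  proof
    fix n assume "finite (Bn B n)"
    hence "finite (Bn B n \<union> (B n - Bn B n))" using Bn_fin[OF dec] by blast
    moreover have "B n \<subseteq> Bn B n \<union> (B n - Bn B n)" by blast
    ultimately show False using inf finite_subset by blast
  qed
  have ex: "\<And>n m. \<exists>x. x \<in> Bn B n \<and> m < x" using infB inf_unb by blast
  define f where "f n = (LEAST x. x \<in> Bn B n \<and> n < x)" for n
  have f: "\<And>n. f n \<in> Bn B n \<and> n < f n" unfolding f_def by (rule LeastI_ex) (use ex in blast)
  show ?thesis
  proof (intro exI conjI allI)
    show "infinite (range f)"
      unfolding inf_unb using f by blast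
    fix n
    have "range f - B n \<subseteq> f ` {..<n}"
    proof
      fix x assume x: "x \<in> range f - B n"
      then obtain m where m: "x = f m" by blast
      have "\<not> n \<le> m"
      proof
        assume "n \<le> m"
        hence "f m \<in> B n" using f[of m] Bn_mono[of n m B] Bn_sub[of B n] by blast
        thus False using x m by simp
      qed
      thus "x \<in> f ` {..<n}" using m by auto
    qed
    thus "range f \<subseteq>\<^sup>* B n" unfolding almost_sub_def by (rule finite_subset) simp
  qed
qed


lemma rec_tower:
  fixes r :: "'i rel" and Hf :: "'i \<Rightarrow> nat \<Rightarrow> nat"
  assumes W: "Well_order r" and bt: "below_t r"
  shows "\<exists>Y. infinite Y \<and> (\<forall>j\<in>Field r. finite (bad (Hf j) Y))"
proof -
  define F where "F g j = (SOME Q. infinite Q \<and> finite (bad (Hf j) Q) \<and>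
      (\<forall>i. (i,j) \<in> r - Id \<longrightarrow> Q \<subseteq>\<^sup>* g i))" for g :: "'i \<Rightarrow> nat set" and j
  define Yr where "Yr = wfrec (r - Id) F"
  have wf: "wf (r - Id)" using W by (simp add: well_order_on_def)
  have refl: "refl_on (Field r) r"
    using W unfolding well_order_on_def linear_order_on_def partial_order_on_def preorder_on_def by blast
  have eq: "Yr j = F Yr j" for j
  proof -
    have "Yr j = F (cut Yr (r - Id) j) j" unfolding Yr_def by (rule wfrec[OF wf])
    also have "\<dots> = F Yr j" unfolding F_def
    proof -
      have "\<And>Q. (\<forall>i. (i,j) \<in> r - Id \<longrightarrow> Q \<subseteq>\<^sup>* cut Yr (r - Id) j i) =
                (\<forall>i. (i,j) \<in> r - Id \<longrightarrow> Q \<subseteq>\<^sup>* Yr i)"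
        using cut_apply by metis
      thus "(SOME Q. infinite Q \<and> finite (bad (Hf j) Q) \<and> (\<forall>i. (i,j) \<in> r - Id \<longrightarrow> Q \<subseteq>\<^sup>* cut Yr (r - Id) j i))
        = (SOME Q. infinite Q \<and> finite (bad (Hf j) Q) \<and> (\<forall>i. (i,j) \<in> r - Id \<longrightarrow> Q \<subseteq>\<^sup>* Yr i))"
        by simp
    qed
    finally show ?thesis .
  qed
  have P: "j \<in> Field r \<longrightarrow> infinite (Yr j) \<and> finite (bad (Hf j) (Yr j)) \<and>
      (\<forall>i. (i,j) \<in> r - Id \<longrightarrow> Yr j \<subseteq>\<^sup>* Yr i)" for j
  proof (induction j rule: wf_induct_rule[OF wf])
    case (1 j)
    show ?case
    proof
      assume jF: "j \<in> Field r"
      define S where "S = {i. (i,j) \<in> r - Id}"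
      have SF: "S \<subseteq> Field r" unfolding S_def by (auto intro: FieldI1)
      have FS: "Field (Restr r S) = S" by (rule Refl_Field_Restr2[OF refl SF])
      have IH: "\<And>i. i \<in> S \<Longrightarrow> infinite (Yr i) \<and> finite (bad (Hf i) (Yr i)) \<and>
          (\<forall>k. (k,i) \<in> r - Id \<longrightarrow> Yr i \<subseteq>\<^sup>* Yr k)"
        using 1 SF unfolding S_def by blast
      have "\<exists>P0. infinite P0 \<and> (\<forall>\<alpha>\<in>Field (Restr r S). P0 \<subseteq>\<^sup>* Yr \<alpha>)"
      proof (rule tower_pi[OF W bt Well_order_Restr[OF W] restr_ordLeq[OF W]])
        show "\<forall>\<alpha>\<in>Field (Restr r S). infinite (Yr \<alpha>)" using IH FS by blast
        show "\<forall>\<alpha> \<beta>. (\<alpha>, \<beta>) \<in> Restr r S \<and> \<alpha> \<noteq> \<beta> \<longrightarrow> Yr \<beta> \<subseteq>\<^sup>* Yr \<alpha>"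
        proof (intro allI impI)
          fix \<alpha> \<beta> assume ab: "(\<alpha>, \<beta>) \<in> Restr r S \<and> \<alpha> \<noteq> \<beta>"
          hence "\<beta> \<in> S" "(\<alpha>, \<beta>) \<in> r - Id" by auto
          thus "Yr \<beta> \<subseteq>\<^sup>* Yr \<alpha>" using IH by blast
        qed
      qed
      then obtain P0 where P0: "infinite P0" "\<forall>\<alpha>\<in>S. P0 \<subseteq>\<^sup>* Yr \<alpha>" using FS by auto
      obtain Q where Q: "Q \<subseteq> P0" "infinite Q" "\<forall>y\<in>Q. \<forall>z\<in>Q. y < z \<longrightarrow> Hf j y < z"
        using thin[OF P0(1), of "Hf j"] by blast
      have "bad (Hf j) Q = {}" using Q(3) unfolding bad_def by (auto simp: not_le[symmetric])
      moreover have "\<forall>i. (i,j) \<in> r - Id \<longrightarrow> Q \<subseteq>\<^sup>* Yr i"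
      proof (intro allI impI)
        fix i assume "(i,j) \<in> r - Id"
        hence "P0 \<subseteq>\<^sup>* Yr i" using P0 unfolding S_def by blast
        moreover have "Q - Yr i \<subseteq> P0 - Yr i" using Q(1) by blast
        ultimately show "Q \<subseteq>\<^sup>* Yr i" unfolding almost_sub_def using finite_subset by blast
      qed
      ultimately have ex: "\<exists>Q. infinite Q \<and> finite (bad (Hf j) Q) \<and>
          (\<forall>i. (i,j) \<in> r - Id \<longrightarrow> Q \<subseteq>\<^sup>* Yr i)" using Q(2) by (metis finite.emptyI)
      show "infinite (Yr j) \<and> finite (bad (Hf j) (Yr j)) \<and>
          (\<forall>i. (i,j) \<in> r - Id \<longrightarrow> Yr j \<subseteq>\<^sup>* Yr i)"
        unfolding eq[of j] F_def by (rule someI_ex[OF ex])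
    qed
  qed
  have "\<exists>Y. infinite Y \<and> (\<forall>\<alpha>\<in>Field r. Y \<subseteq>\<^sup>* Yr \<alpha>)"
  proof (rule tower_pi[OF W bt W ordLeq_reflexive[OF W]])
    show "\<forall>\<alpha>\<in>Field r. infinite (Yr \<alpha>)" using P by blast
    show "\<forall>\<alpha> \<beta>. (\<alpha>, \<beta>) \<in> r \<and> \<alpha> \<noteq> \<beta> \<longrightarrow> Yr \<beta> \<subseteq>\<^sup>* Yr \<alpha>"
      using P by (auto intro: FieldI2)
  qed
  then obtain Y where Y: "infinite Y" "\<forall>\<alpha>\<in>Field r. Y \<subseteq>\<^sup>* Yr \<alpha>" by blast
  show ?thesis
  proof (intro exI conjI ballI)
    show "infinite Y" by (rule Y(1))
    fix j assume "j \<in> Field r"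
    thus "finite (bad (Hf j) Y)" using P[of j] Y(2) bad_open by blast
  qed
qed


theorem lemma2p4:
  fixes r :: "'i rel" and A :: "'i \<Rightarrow> nat set" and B :: "nat \<Rightarrow> nat set"
  assumes "Well_order r"
    and "below_t r"
    and "\<forall>i\<in>Field r. infinite (A i)"
    and "\<forall>n. infinite (B n)"
    and "\<forall>n m. n < m \<longrightarrow> B m \<subseteq>\<^sup>* B n"
    and "\<forall>i\<in>Field r. \<forall>n. infinite (A i \<inter> B n)"
    and "\<forall>i j. (i, j) \<in> r \<and> i \<noteq> j \<longrightarrow> (\<exists>n. A j \<inter> B n \<subseteq>\<^sup>* A i \<inter> B n)"
  shows "\<exists>X. infinite X \<and> (\<forall>i\<in>Field r. X \<subseteq>\<^sup>* A i) \<and> (\<forall>n. X \<subseteq>\<^sup>* B n)"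
proof (cases "Field r = {}")
  case True
  obtain X where "infinite X" "\<forall>n. X \<subseteq>\<^sup>* B n" using pseudo_B[OF assms(5) assms(4)] by blast
  thus ?thesis using True by blast
next
  case False
  note W = assms(1) and bt = assms(2)
  define B' where "B' = Bn B"
  have finB: "\<And>n. finite (B n - B' n)" unfolding B'_def by (rule Bn_fin[OF assms(5)])
  have infAB: "\<And>j n. j \<in> Field r \<Longrightarrow> infinite (A j \<inter> B' n)"
  proof
    fix j n assume j: "j \<in> Field r" and f: "finite (A j \<inter> B' n)"
    have "A j \<inter> B n \<subseteq> (A j \<inter> B' n) \<union> (B n - B' n)" by blast
    moreover have "finite ((A j \<inter> B' n) \<union> (B n - B' n))" using f finB by blast
    ultimately show False using assms(6) j finite_subset by blast
  qed
  define H where "H j y = (LEAST x. x \<in> A j \<and> x \<in> B' y \<and> y \<le> x)" for j y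
  have Hp: "\<And>j y. j \<in> Field r \<Longrightarrow> H j y \<in> A j \<and> H j y \<in> B' y \<and> y \<le> H j y"
  proof -
    fix j y assume j: "j \<in> Field r"
    obtain x where "y < x" "x \<in> A j \<inter> B' y" using infAB[OF j, of y] inf_unb by blast
    hence ex: "\<exists>x. x \<in> A j \<and> x \<in> B' y \<and> y \<le> x" by auto
    show "H j y \<in> A j \<and> H j y \<in> B' y \<and> y \<le> H j y"
      unfolding H_def by (rule LeastI_ex[OF ex])
  qed
  obtain Y where Y: "infinite Y" "\<forall>j\<in>Field r. finite (bad (H j) Y)"
    using rec_tower[OF W bt, of H] by blast
  define C where "C = {x. \<exists>y\<in>Y. y \<le> x \<and> x \<in> B' y \<and> (\<forall>z\<in>Y. y < z \<longrightarrow> x < z)}"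
  have CB: "finite (C - B n)" for n
  proof -
    obtain z0 where z0: "n < z0" "z0 \<in> Y" using Y(1) inf_unb by blast
    have "C - B n \<subseteq> {..<z0}"
    proof
      fix x assume x: "x \<in> C - B n"
      then obtain y where y: "y \<in> Y" "y \<le> x" "x \<in> B' y" "\<forall>z\<in>Y. y < z \<longrightarrow> x < z"
        unfolding C_def by blast
      show "x \<in> {..<z0}"
      proof (cases "n \<le> y")
        case True
        hence "x \<in> B n" using y(3) Bn_mono[OF True, of B] Bn_sub[of B n] unfolding B'_def by blast
        thus ?thesis using x by blast
      next
        case False
        thus ?thesis using y(4) z0 by auto
      qed
    qed
    thus ?thesis using finite_subset by blast
  qed
  define Z where "Z j = A j \<inter> C" for j
  have Zinf: "\<forall>j\<in>Field r. infinite (Z j)"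
  proof
    fix j assume j: "j \<in> Field r"
    have "infinite (Y - bad (H j) Y)" using Y j Diff_infinite_finite by blast
    show "infinite (Z j)" unfolding inf_unb
    proof
      fix m
      obtain y where y: "m < y" "y \<in> Y - bad (H j) Y"
        using \<open>infinite (Y - bad (H j) Y)\<close> inf_unb by blast
      have nb: "\<forall>z\<in>Y. y < z \<longrightarrow> H j y < z" using y(2) unfolding bad_def by (auto simp: not_le)
      have "H j y \<in> C" unfolding C_def using Hp[OF j, of y] nb y(2) by blast
      hence "H j y \<in> Z j" using Hp[OF j, of y] unfolding Z_def by blast
      moreover have "m < H j y" using Hp[OF j, of y] y(1) by linarith
      ultimately show "\<exists>n. m < n \<and> n \<in> Z j" by blast
    qed
  qed
  have Zdec: "\<forall>i j. (i, j) \<in> r \<and> i \<noteq> j \<longrightarrow> Z j \<subseteq>\<^sup>* Z i"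
  proof (intro allI impI)
    fix i j assume ij: "(i, j) \<in> r \<and> i \<noteq> j"
    then obtain n where n: "A j \<inter> B n \<subseteq>\<^sup>* A i \<inter> B n" using assms(7) by blast
    have "Z j - Z i \<subseteq> (C - B n) \<union> ((A j \<inter> B n) - (A i \<inter> B n))" unfolding Z_def by blast
    moreover have "finite ((C - B n) \<union> ((A j \<inter> B n) - (A i \<inter> B n)))"
      using CB n unfolding almost_sub_def by blast
    ultimately show "Z j \<subseteq>\<^sup>* Z i" unfolding almost_sub_def using finite_subset by blast
  qed
  obtain X where X: "infinite X" "\<forall>j\<in>Field r. X \<subseteq>\<^sup>* Z j"
    using tower_pi[OF W bt W ordLeq_reflexive[OF W] Zinf Zdec] by blast
  obtain j0 where j0: "j0 \<in> Field r" using False by blast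
  show ?thesis
  proof (intro exI conjI ballI allI)
    show "infinite X" by (rule X(1))
    fix i assume i: "i \<in> Field r"
    have "X - A i \<subseteq> X - Z i" unfolding Z_def by blast
    thus "X \<subseteq>\<^sup>* A i" using X(2) i unfolding almost_sub_def using finite_subset by blast
  next
    fix n
    have "X - B n \<subseteq> (X - Z j0) \<union> (C - B n)" unfolding Z_def by blast
    moreover have "finite ((X - Z j0) \<union> (C - B n))" using X(2) j0 CB unfolding almost_sub_def by blast
    ultimately show "X \<subseteq>\<^sup>* B n" unfolding almost_sub_def using finite_subset by blast
  qed
qed

end
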